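(* Let $R_n\in\mathbb{Z}[x,y,z]$ be the Markov–Pell polynomials. Then for all $k\ge2$, $$R_{2k+1}=(x^2+y^2)(x^2+y^2+z^2)\,R_{2k-1}-x^2y^2z^4\,R_{2k-3},$$ and for all $k\ge0$, $R_{2k+1}(x,y,z)=P_{k/(k+1)}(x^2,y^2,z^2)$ (with $P_{0/1}:=1$).
   Context: Markov polynomials. Let $x,y,z$ be indeterminates. Consider the set consisting of all rationals $\rho\in[0,1]$, each written in lowest terms $\rho=a/b$ with integers $a\ge 0$, $b\ge 1$, together with the formal symbol $1/0$. Define Laurent polynomials $M_\rho(x,y,z)$ recursively by $M_{1/0}=y$, $M_{0/1}=x$, $M_{1/1}=\frac{x^2+y^2}{z}$, and: whenever $a/b$, $c/d$ are in this set with $|ad-bc|=1$ and $(a+2c)/(b+2d)\in[0,1]$, then $M_{\frac{a+2c}{b+2d}}=\big(M_{c/d}^2+M_{\frac{a+c}{b+d}}^2\big)/M_{a/b}$. This determines $M_\rho$ for every rational $\rho\in[0,1]$. Numerator. For coprime $1\le a\le b$, $P_{a/b}(u,v,w)$ denotes the homogeneous polynomial of degree $a+b-1$ such that $M_{a/b}(x,y,z)=P_{a/b}(x^2,y^2,z^2)/(x^{a-1}y^{b-1}z^{a+b-1})$; its existence is known. Markov–Pell polynomials: $R_0=0$, $R_1=1$, and for $k\ge1$: $R_{2k}=(x^2+y^2)R_{2k-1}+y^2z^2R_{2k-2}$, $R_{2k+1}=(x^2+y^2)R_{2k}+x^2z^2R_{2k-1}$. *)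

theory Defs
  imports Complex_Main
begin

fun MP :: "'a::comm_ring_1 \<Rightarrow> 'a \<Rightarrow> 'a \<Rightarrow> nat \<Rightarrow> 'a" where
  "MP x y z 0 = 0"
| "MP x y z (Suc 0) = 1"
| "MP x y z (Suc (Suc n)) =
     (if even n then (x^2 + y^2) * MP x y z (Suc n) + y^2 * z^2 * MP x y z n
      else (x^2 + y^2) * MP x y z (Suc n) + x^2 * z^2 * MP x y z n)"

text \<open>A fraction a/b (lowest terms,
  or the formal symbol 1/0) is represented by the pair (a,b). Markov_rel x y z (a,b) v
  means: the recursion of the paper derives the value v for M_{a/b}(x,y,z).\<close>
inductive Markov_rel :: "real \<Rightarrow> real \<Rightarrow> real \<Rightarrow> nat \<times> nat \<Rightarrow> real \<Rightarrow> bool"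
  for x y z :: real where
  inf: "Markov_rel x y z (1, 0) y"
| zero: "Markov_rel x y z (0, 1) x"
| one: "Markov_rel x y z (1, 1) ((x^2 + y^2) / z)"
| step: "\<lbrakk> Markov_rel x y z (a, b) A; Markov_rel x y z (c, d) C;
           Markov_rel x y z (a + c, b + d) B;
           \<bar>int a * int d - int b * int c\<bar> = 1;
           a + 2 * c \<le> b + 2 * d \<rbrakk>
         \<Longrightarrow> Markov_rel x y z (a + 2 * c, b + 2 * d) ((C^2 + B^2) / A)"

definition Markov_M :: "real \<Rightarrow> real \<Rightarrow> real \<Rightarrow> nat \<Rightarrow> nat \<Rightarrow> real" where
  "Markov_M x y z a b = (THE v. Markov_rel x y z (a, b) v)"

end

theory Submission imports Defs begin

lemma MP_odd: "MP x y z (2*m+3) = (x^2 + y^2) * MP x y z (2*m+2) + x^2 * z^2 * MP x y z (2*m+1)"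
proof -
  have h: "MP x y z (Suc (Suc (Suc (2*m)))) = (x^2 + y^2) * MP x y z (Suc (Suc (2*m))) + x^2 * z^2 * MP x y z (Suc (2*m))"
    by simp
  have e: "Suc (2*m) = 2*m+1" "Suc (2*m+1) = 2*m+2" "Suc (2*m+2) = 2*m+3" by simp_all
  show ?thesis using h by (simp only: e)
qed

lemma MP_even: "MP x y z (2*m+2) = (x^2 + y^2) * MP x y z (2*m+1) + y^2 * z^2 * MP x y z (2*m)"
proof -
  have h: "MP x y z (Suc (Suc (2*m))) = (x^2 + y^2) * MP x y z (Suc (2*m)) + y^2 * z^2 * MP x y z (2*m)"
    by simp
  have e: "Suc (2*m) = 2*m+1" "Suc (2*m+1) = 2*m+2" by simp_all
  show ?thesis using h by (simp only: e)
qed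

declare MP.simps(3)[simp del]

lemma MP1[simp]: "MP x y z 1 = 1" using MP.simps(2) by (simp add: One_nat_def)

lemma MP_rec:
  fixes x y z :: "'a::comm_ring_1"
  shows "MP x y z (2*m+5) = (x^2 + y^2) * (x^2 + y^2 + z^2) * MP x y z (2*m+3)
                               - x^2 * y^2 * z^4 * MP x y z (2*m+1)"
proof -
  have ix: "2*m+2+3 = 2*m+5" "2*m+2+2 = 2*m+4" "2*m+2+1 = 2*m+3" "2*(m+1) = 2*m+2" by simp_all
  have e1: "MP x y z (2*m+5) = (x^2 + y^2) * MP x y z (2*m+4) + x^2 * z^2 * MP x y z (2*m+3)"
    using MP_odd[of x y z "m+1"] by (simp only: ix)
  have e2: "MP x y z (2*m+4) = (x^2 + y^2) * MP x y z (2*m+3) + y^2 * z^2 * MP x y z (2*m+2)"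
    using MP_even[of x y z "m+1"] by (simp only: ix)
  have e3: "MP x y z (2*m+3) = (x^2 + y^2) * MP x y z (2*m+2) + x^2 * z^2 * MP x y z (2*m+1)"
    by (rule MP_odd)
  show ?thesis unfolding e1 e2 e3 by (simp add: algebra_simps power2_eq_square power4_eq_xxxx)
qed

lemma MP_pos:
  fixes x y z :: real
  assumes "x \<noteq> 0" "y \<noteq> 0" "z \<noteq> 0"
  shows "MP x y z (Suc n) > 0 \<and> MP x y z n \<ge> 0"
proof (induction n)
  case 0 then show ?case by simp
next
  case (Suc n)
  have s: "x^2 + y^2 > 0" using assms by (simp add: add_pos_pos)
  have "MP x y z (Suc (Suc n)) > 0"
    using Suc s assms by (auto simp: MP.simps(3) intro!: add_pos_nonneg mult_nonneg_nonneg)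
  then show ?case using Suc by simp
qed

lemma abs_cas:
  fixes A B C D T Q :: "'a::comm_ring_1"
  assumes "D = T * C - Q * B" "C = T * B - Q * A"
  shows "D * B - C^2 = Q * (C * A - B^2)"
proof -
  have "D*B - C^2 = (T*(T*B-Q*A) - Q*B)*B - (T*B-Q*A)^2" using assms by simp
  also have "... = Q*((T*B-Q*A)*A - B^2)" by (simp add: algebra_simps power2_eq_square)
  finally show ?thesis using assms by simp
qed

lemma cassini:
  fixes x y z :: "'a::comm_ring_1"
  shows "MP x y z (2*m+5) * MP x y z (2*m+1) - (MP x y z (2*m+3))^2
         = (x^2*y^2*z^4)^m * (x^2+y^2)^2 * y^2 * z^2"
proof (induction m)
  case 0
  have "MP x y z 5 = (x^2 + y^2) * (x^2 + y^2 + z^2) * MP x y z 3 - x^2 * y^2 * z^4 * MP x y z 1"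
    using MP_rec[of x y z 0] by simp
  moreover have "MP x y z 3 = (x^2+y^2)^2 + x^2*z^2"
  proof -
    have z0: "(2::nat)*0+3 = 3" "(2::nat)*0+2=2" "(2::nat)*0+1=1" "(2::nat)*0 = 0" by simp_all
    have a: "MP x y z 3 = (x^2+y^2) * MP x y z 2 + x^2*z^2 * MP x y z 1" using MP_odd[of x y z 0] by (simp only: z0 add_0 MP1 mult_1_right)
    have b: "MP x y z 2 = (x^2+y^2) * MP x y z 1 + y^2*z^2 * MP x y z 0" using MP_even[of x y z 0] by (simp only: z0 add_0)
    show ?thesis unfolding a b by (simp add: MP1 power2_eq_square)
  qed
  ultimately show ?case by (simp add: algebra_simps power2_eq_square power4_eq_xxxx)
next
  case (Suc m)
  have e: "2 * Suc m + 5 = 2*m+7" "2 * Suc m + 3 = 2*m+5" "2 * Suc m + 1 = 2*m+3" by simp_all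
  have r: "MP x y z (2*m+7) = (x^2 + y^2) * (x^2 + y^2 + z^2) * MP x y z (2*m+5)
                               - x^2 * y^2 * z^4 * MP x y z (2*m+3)"
    using MP_rec[of x y z "Suc m"] by (simp only: e)
  have r2: "MP x y z (2*m+5) = (x^2 + y^2) * (x^2 + y^2 + z^2) * MP x y z (2*m+3)
                               - x^2 * y^2 * z^4 * MP x y z (2*m+1)" by (rule MP_rec)
  have "MP x y z (2*m+7) * MP x y z (2*m+3) - (MP x y z (2*m+5))^2
      = x^2*y^2*z^4 * (MP x y z (2*m+5) * MP x y z (2*m+1) - (MP x y z (2*m+3))^2)"
    using abs_cas[OF r r2] .
  then have "MP x y z (2*m+7) * MP x y z (2*m+3) - (MP x y z (2*m+5))^2
      = x^2*y^2*z^4 * ((x^2*y^2*z^4)^m * (x^2+y^2)^2 * y^2 * z^2)" using Suc.IH by (simp only:)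
  then show ?case by (simp only: e power_Suc mult.assoc)
qed

lemma decomp_unique:
  fixes a b c d a' b' c' d' :: nat
  assumes h1: "a+2*c = a'+2*c'" and h2: "b+2*d = b'+2*d'"
    and d1: "\<bar>int a*int d - int b*int c\<bar> = 1" and d2: "\<bar>int a'*int d' - int b'*int c'\<bar> = 1"
  shows "a=a' \<and> b=b' \<and> c=c' \<and> d=d'"
proof -
  define p where "p = int a + 2*int c"
  define q where "q = int b + 2*int d"
  define e where "e = int c * q - int d * p"
  define e' where "e' = int c' * q - int d' * p"
  have p': "p = int a' + 2*int c'" using h1 p_def by linarith
  have q': "q = int b' + 2*int d'" using h2 q_def by linarith
  have ee: "e = int b * int c - int a * int d" unfolding e_def p_def q_def by (simp add: algebra_simps)
  have ee': "e' = int b' * int c' - int a' * int d'" unfolding e'_def p' q' by (simp add: algebra_simps)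
  have ae: "\<bar>e\<bar> = 1" using d1 ee by linarith
  have ae': "\<bar>e'\<bar> = 1" using d2 ee' by linarith
  have ae1: "e = 1 \<or> e = -1" using ae by linarith
  have ppos: "p > 0"
  proof (rule ccontr)
    assume "\<not> p > 0" then have "a = 0" "c = 0" using p_def by auto
    then show False using d1 by simp
  qed
  show ?thesis
  proof (cases "e = e'")
    case True
    have "(int c - int c') * e = p * (int c * (int d - int d') - (int c - int c') * int d)"
    proof -
      have H: "(int c - int c') * q = (int d - int d') * p" using True e_def e'_def by (simp add: algebra_simps)
      have "(int c - int c') * e = int c * ((int c - int c') * q) - (int c - int c') * int d * p"
        unfolding e_def by (simp add: algebra_simps)
      also have "... = int c * ((int d - int d') * p) - (int c - int c') * int d * p" using H by simp
      also have "... = p * (int c * (int d - int d') - (int c - int c') * int d)" by (simp add: algebra_simps)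
      finally show ?thesis .
    qed
    then have "p dvd (int c - int c') * e" by simp
    then have "p dvd (int c - int c')" using ae1 by (metis dvd_minus_iff mult.right_neutral mult_minus_right)
    then obtain t where t: "int c - int c' = p * t" by (auto elim: dvdE)
    have b1: "2 * int c \<le> p" "2 * int c' \<le> p" using p_def p' by auto
    have "t = 0"
    proof (rule ccontr)
      assume "t \<noteq> 0"
      then have "\<bar>p * t\<bar> \<ge> p" using ppos by (simp add: abs_mult)
      then show False using t b1 ppos by linarith
    qed
    then have cc: "c = c'" using t by simp
    then have "(int d - int d') * p = 0" using True e_def e'_def by (simp add: algebra_simps) (metis eq_commute)
    then have "d = d'" using ppos by simp
    then show ?thesis using cc h1 h2 by simp
  next
    case False
    then have ne: "e' = - e" using ae ae' by (auto simp: abs_if split: if_splits)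
    have "(int c + int c') * e = p * (int c * (int d + int d') - (int c + int c') * int d)"
    proof -
      have H: "(int c + int c') * q = (int d + int d') * p" using ne e_def e'_def by (simp add: algebra_simps)
      have "(int c + int c') * e = int c * ((int c + int c') * q) - (int c + int c') * int d * p"
        unfolding e_def by (simp add: algebra_simps)
      also have "... = int c * ((int d + int d') * p) - (int c + int c') * int d * p" using H by simp
      also have "... = p * (int c * (int d + int d') - (int c + int c') * int d)" by (simp add: algebra_simps)
      finally show ?thesis .
    qed
    then have "p dvd (int c + int c') * e" by simp
    then have "p dvd (int c + int c')" using ae1 by (metis dvd_minus_iff mult.right_neutral mult_minus_right)
    then obtain t where t: "int c + int c' = p * t" by (auto elim: dvdE)
    have b1: "2 * int c \<le> p" "2 * int c' \<le> p" using p_def p' by auto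
    have "t = 0 \<or> t = 1"
    proof (rule ccontr)
      assume "\<not> (t = 0 \<or> t = 1)"
      then have "t < 0 \<or> t \<ge> 2" by linarith
      then show False
      proof
        assume "t < 0" then have "p * t < 0" using ppos by (simp add: mult_pos_neg)
        then show False using t by linarith
      next
        assume "t \<ge> 2" then have "p * t \<ge> p * 2" using ppos by (simp add: mult_left_mono)
        then show False using t b1 ppos by linarith
      qed
    qed
    then show ?thesis
    proof
      assume "t = 0"
      then have "c = 0" "c' = 0" using t by auto
      then have "(int d + int d') * p = 0" using ne e_def e'_def by (simp add: algebra_simps)
      then have "d = 0" using ppos by simp
      then show ?thesis using d1 \<open>c = 0\<close> by simp
    next
      assume "t = 1"
      then have "2 * int c = p" using t b1 by simp
      then have "a = 0" using p_def by simp
      have "(int c + int c') * q = (int d + int d') * p" using ne e_def e'_def by (simp add: algebra_simps)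
      then have "p * q = (int d + int d') * p" using t \<open>t = 1\<close> by simp
      then have "q = int d + int d'" using ppos by simp
      then have "2 * int d = q" using q_def q' by linarith
      then have "b = 0" using q_def by simp
      then show ?thesis using d1 \<open>a = 0\<close> by simp
    qed
  qed
qed


lemma rel_pos: "Markov_rel x y z P v \<Longrightarrow> fst P + snd P > 0"
  by (induction rule: Markov_rel.induct) auto

lemma one_eq: "(Suc 0 = a + 2*c) = (a = Suc 0 \<and> c = (0::nat))" by arith
lemma rel_inf: "Markov_rel x y z (1,0) w \<Longrightarrow> w = y"
  by (erule Markov_rel.cases) (simp_all add: one_eq)
lemma rel_zero: "Markov_rel x y z (0,1) w \<Longrightarrow> w = x"
  by (erule Markov_rel.cases) (simp_all add: one_eq)
lemma rel_one: "Markov_rel x y z (1,1) w \<Longrightarrow> w = (x^2 + y^2) / z"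
  by (erule Markov_rel.cases) (simp_all add: one_eq)

lemma rel_uniq: "Markov_rel x y z P v \<Longrightarrow> Markov_rel x y z P w \<Longrightarrow> v = w"
proof (induction "fst P + snd P" arbitrary: P v w rule: less_induct)
  case less
  show ?case
  proof (cases "P = (1,0) \<or> P = (0,1) \<or> P = (1,1)")
    case True
    then show ?thesis using less.prems by (metis rel_inf rel_zero rel_one)
  next
    case nb: False
  from less.prems(1) show ?thesis
  proof cases
    case inf then show ?thesis using nb by simp
  next
    case zero then show ?thesis using nb by simp
  next
    case one then show ?thesis using nb by simp
  next
    case (step a b A c d C B)
    note s1 = step
    from less.prems(2) show ?thesis
    proof cases
      case inf then show ?thesis using nb by simp
    next
      case zero then show ?thesis using nb by simp
    next
      case one then show ?thesis using nb by simp
    next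
      case (step a' b' A' c' d' C' B')
      have pe: "a+2*c = a'+2*c'" "b+2*d = b'+2*d'" using s1(1) step(1) by simp_all
      have "a=a' \<and> b=b' \<and> c=c' \<and> d=d'"
        by (rule decomp_unique[OF pe \<open>\<bar>int a * int d - int b * int c\<bar> = 1\<close> \<open>\<bar>int a' * int d' - int b' * int c'\<bar> = 1\<close>])
      then have eqs: "a=a'" "b=b'" "c=c'" "d=d'" by auto
      have cd: "c + d > 0" using rel_pos[OF \<open>Markov_rel x y z (c, d) C\<close>] by simp
      have ab: "a + b > 0" using rel_pos[OF \<open>Markov_rel x y z (a, b) A\<close>] by simp
      have fP: "fst P + snd P = a + b + 2*(c+d)" using s1(1) by simp
      have "A = A'"
        by (rule less.hyps[of "(a,b)"]) (use fP cd \<open>Markov_rel x y z (a, b) A\<close> \<open>Markov_rel x y z (a', b') A'\<close> eqs in simp_all)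
      moreover have "C = C'"
        by (rule less.hyps[of "(c,d)"]) (use fP ab \<open>Markov_rel x y z (c, d) C\<close> \<open>Markov_rel x y z (c', d') C'\<close> eqs in simp_all)
      moreover have "B = B'"
        by (rule less.hyps[of "(a+c,b+d)"]) (use fP cd \<open>Markov_rel x y z (a+c, b+d) B\<close> \<open>Markov_rel x y z (a'+c', b'+d') B'\<close> eqs in auto)
      ultimately show ?thesis using s1(2) step(2) by simp
    qed
  qed
  qed
qed


definition NN :: "real \<Rightarrow> real \<Rightarrow> real \<Rightarrow> nat \<Rightarrow> real" where
  "NN x y z k = MP x y z (2*k+1) * x / (x*y*z^2)^k"

lemma NN_rec:
  fixes x y z :: real
  assumes nz: "x \<noteq> 0" "y \<noteq> 0" "z \<noteq> 0"
  shows "NN x y z (m+2) = (((x^2+y^2)/z)^2 + (NN x y z (m+1))^2) / NN x y z m"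
proof -
  define u where "u = x*y*z^2"
  have u0: "u \<noteq> 0" using nz u_def by simp
  have S0: "MP x y z (2*m+1) > 0" using MP_pos[OF nz, of "2*m"] by simp
  have N0: "NN x y z m \<noteq> 0" unfolding NN_def using S0 nz u0 u_def by simp
  have c: "MP x y z (2*m+5) * MP x y z (2*m+1) = (MP x y z (2*m+3))^2 + (u^2)^m * (x^2+y^2)^2 * y^2 * z^2"
    using cassini[of x y z m] unfolding u_def by (simp add: power_mult_distrib algebra_simps power4_eq_xxxx power2_eq_square)
  have um: "u ^ (m * 2) = u^m * u^m" by (simp add: power_add[symmetric] mult_2_right)
  have i: "2*(m+2)+1 = 2*m+5" "2*(m+1)+1 = 2*m+3" by simp_all
  have "NN x y z (m+2) * NN x y z m = MP x y z (2*m+5) * MP x y z (2*m+1) * x^2 / u^(2*m+2)"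
    unfolding NN_def u_def[symmetric] i by (simp add: power2_eq_square power_add field_simps mult_2 um)
  also have "... = (MP x y z (2*m+3))^2 * x^2 / u^(2*m+2) + (u^2)^m * (x^2+y^2)^2 * y^2 * z^2 * x^2 / u^(2*m+2)"
    unfolding c by (simp add: add_divide_distrib algebra_simps)
  also have "(MP x y z (2*m+3))^2 * x^2 / u^(2*m+2) = (NN x y z (m+1))^2"
    unfolding NN_def u_def[symmetric] i by (simp add: power2_eq_square power_add field_simps mult_2 um)
  also have "(u^2)^m * (x^2+y^2)^2 * y^2 * z^2 * x^2 / u^(2*m+2) = (x^2+y^2)^2 * y^2 * z^2 * x^2 / u^2"
    using u0 by (simp add: power_mult[symmetric] power_add field_simps um power2_eq_square)
  also have "... = ((x^2+y^2)/z)^2"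
    using nz unfolding u_def by (simp add: field_simps power2_eq_square power4_eq_xxxx)
  finally have "NN x y z (m+2) * NN x y z m = ((x^2+y^2)/z)^2 + (NN x y z (m+1))^2" by simp
  then show ?thesis using N0 by (simp add: field_simps)
qed

lemma NN_exists:
  fixes x y z :: real
  assumes nz: "x \<noteq> 0" "y \<noteq> 0" "z \<noteq> 0"
  shows "Markov_rel x y z (k, k+1) (NN x y z k)"
proof (induction k rule: less_induct)
  case (less k)
  show ?case
  proof (cases k)
    case 0
    have "NN x y z 0 = x" unfolding NN_def by simp
    then show ?thesis using 0 Markov_rel.zero[of x y z] by simp
  next
    case (Suc k1)
    show ?thesis
    proof (cases k1)
      case 0
      have r: "Markov_rel x y z (1 + 2*0, 0 + 2*1) ((x^2 + ((x^2+y^2)/z)^2) / y)"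
        by (rule Markov_rel.step[OF Markov_rel.inf Markov_rel.zero]) (use Markov_rel.one in simp_all)
      have m3: "MP x y z 3 = (x^2+y^2)^2 + x^2*z^2"
      proof -
        have z0: "(2::nat)*0+3 = 3" "(2::nat)*0+2=2" "(2::nat)*0+1=1" "(2::nat)*0 = 0" by simp_all
        have a: "MP x y z 3 = (x^2+y^2) * MP x y z 2 + x^2*z^2 * MP x y z 1" using MP_odd[of x y z 0] by (simp only: z0 add_0 MP1 mult_1_right)
        have b: "MP x y z 2 = (x^2+y^2) * MP x y z 1 + y^2*z^2 * MP x y z 0" using MP_even[of x y z 0] by (simp only: z0 add_0)
        show ?thesis unfolding a b by (simp add: MP1 power2_eq_square)
      qed
      have t3: "(2::nat)*1+1 = 3" by simp
      have "NN x y z 1 = (x^2 + ((x^2+y^2)/z)^2) / y"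
        unfolding NN_def t3 m3 using nz by (simp add: field_simps power2_eq_square)
      then show ?thesis using r Suc 0 by simp
    next
      case (Suc m)
      have k: "k = m+2" using \<open>k = Suc k1\<close> Suc by simp
      have r1: "Markov_rel x y z (m, m+1) (NN x y z m)" using less k by simp
      have r2: "Markov_rel x y z (m+1, m+1+1) (NN x y z (m+1))" using less k by simp
      have r: "Markov_rel x y z (m + 2*1, (m+1) + 2*1) ((((x^2+y^2)/z)^2 + (NN x y z (m+1))^2) / NN x y z m)"
        by (rule Markov_rel.step[OF r1 Markov_rel.one]) (use r2 in simp_all)
      then show ?thesis using k NN_rec[OF nz, of m] by (simp add: add.assoc)
    qed
  qed
qed


lemma NN_form:
  fixes x y z :: real
  assumes nz: "x \<noteq> 0" "y \<noteq> 0" "z \<noteq> 0"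
  shows "NN x y z k = MP x y z (2*k+1) / (x powi (int k - 1) * y^k * z^(2*k))"
proof -
  have p: "x powi (int k - 1) = x^k / x"
    using power_int_diff[of x "int k" 1] nz by simp
  have h: "(x*y*z^2)^k = x^k * y^k * z^(2*k)" by (simp add: power_mult_distrib power_mult)
  show ?thesis unfolding NN_def p h using nz
    by (simp add: field_simps)
qed

theorem mainTheorem8:
  shows "(\<forall>(x::'a::comm_ring_1) y z k. k \<ge> 2 \<longrightarrow>
            MP x y z (2*k+1) = (x^2 + y^2) * (x^2 + y^2 + z^2) * MP x y z (2*k-1)
                               - x^2 * y^2 * z^4 * MP x y z (2*k-3))
       \<and> (\<forall>(x::real) y z k. x \<noteq> 0 \<longrightarrow> y \<noteq> 0 \<longrightarrow> z \<noteq> 0 \<longrightarrow>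
            Markov_M x y z k (k+1) = MP x y z (2*k+1) / (x powi (int k - 1) * y^k * z^(2*k)))"
proof (intro conjI allI impI)
  fix x y z :: 'a and k :: nat
  assume "k \<ge> 2"
  then obtain m where m: "k = m + 2" by (metis add.commute le_add_diff_inverse)
  have i: "2*k+1 = 2*m+5" "2*k-1 = 2*m+3" "2*k-3 = 2*m+1" using m by simp_all
  show "MP x y z (2*k+1) = (x^2 + y^2) * (x^2 + y^2 + z^2) * MP x y z (2*k-1)
                               - x^2 * y^2 * z^4 * MP x y z (2*k-3)"
    unfolding i by (rule MP_rec)
next
  fix x y z :: real and k :: nat
  assume nz: "x \<noteq> 0" "y \<noteq> 0" "z \<noteq> 0"
  have "Markov_M x y z k (k+1) = NN x y z k"
    unfolding Markov_M_def
    by (rule the_equality) (use rel_uniq NN_exists[OF nz] in blast)+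
  then show "Markov_M x y z k (k+1) = MP x y z (2*k+1) / (x powi (int k - 1) * y^k * z^(2*k))"
    using NN_form[OF nz] by simp
qed

end
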